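(* Consider the binary state-dependent channel with $\mathcal{X}=\mathcal{S}=\mathcal{Y}=\mathcal{Z}=\{0,1\}$, $P_S=\mathrm{Bernoulli}(p)$ with $p\in(0,\tfrac12)$, channel law $Y=Z=X\oplus S$ (modulo-2 addition), no-input symbol $x_0=0$, secret-key rate $R_K>0$, and no binding cost constraint (e.g. $b\equiv 0$). Then the covert capacities with causal and with noncausal CSI at the transmitter are $$C_{\mathrm{c}}=C_{\mathrm{nc}}=H_{\mathrm b}(p)=p\log\frac1p+(1-p)\log\frac1{1-p}.$$
   Context: A state-dependent discrete memoryless channel consists of finite alphabets $\mathcal{X},\mathcal{S},\mathcal{Y},\mathcal{Z}$, state PMF $P_S$ and channel law $P_{Y,Z|S,X}$; states $S^n$ are IID $\sim P_S$, known to the transmitter (causally: $X_i$ depends on $(M,K,S^i)$; noncausally: $X^n$ depends on $(M,K,S^n)$; in both cases possibly also on private randomness) but not to the receiver or warden. $Q_0(z)=\sum_s P_S(s)P_{Z|S,X}(z|s,x_0)$. Key $K$ uniform on $[1:2^{nR_K}]$ and message $M$ uniform on $[1:2^{nR}]$ are independent of each other and of $S^n$; the decoder maps $(Y^n,K)$ to $\hat M$. A rate $R$ is achievable if there are codes with $\limsup_n \mathrm{E}[\frac1n\sum_i b(X_i)]\le B$, $P(\hat M\neq M)\to0$ and $D(\widehat{P}_{Z^n}\|Q_0^{\times n})\to0$, where $\widehat{P}_{Z^n}$ is the warden's output distribution induced by the code; the covert capacity $C_{\mathrm{c}}$ (causal) or $C_{\mathrm{nc}}$ (noncausal) is the supremum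 of achievable rates. *)

theory Defs
  imports "HOL-Analysis.Analysis" "HOL-Library.Extended_Real"
begin

definition seqs :: "nat \<Rightarrow> 'a list set" where
  "seqs n = {xs. length xs = n}"

definition iid :: "('a \<Rightarrow> real) \<Rightarrow> 'a list \<Rightarrow> real" where
  "iid P xs = prod_list (map P xs)"

definition chan_n :: "('s \<Rightarrow> 'x \<Rightarrow> 'y \<Rightarrow> 'z \<Rightarrow> real) \<Rightarrow> 's list \<Rightarrow> 'x list \<Rightarrow> 'y list \<Rightarrow> 'z list \<Rightarrow> real" where
  "chan_n W s x y z = (\<Prod>i<length x. W (s!i) (x!i) (y!i) (z!i))"

definition num_msgs :: "nat \<Rightarrow> real \<Rightarrow> nat" where
  "num_msgs n R = nat \<lceil>2 powr (real n * R)\<rceil>"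

definition num_keys :: "nat \<Rightarrow> real \<Rightarrow> nat" where
  "num_keys n RK = nat \<lfloor>2 powr (real n * RK)\<rfloor>"

text \<open>Stochastic encoder enc m k s x = P(X^n = x | M = m, K = k, S^n = s);
messages are 0..<Mn, keys 0..<Kn (private randomness is absorbed in the kernel).\<close>
definition valid_encoder :: "nat \<Rightarrow> nat \<Rightarrow> nat \<Rightarrow> (nat \<Rightarrow> nat \<Rightarrow> 's list \<Rightarrow> 'x list \<Rightarrow> real) \<Rightarrow> bool" where
  "valid_encoder n Mn Kn enc \<longleftrightarrow>
     (\<forall>m<Mn. \<forall>k<Kn. \<forall>s\<in>seqs n.
        (\<forall>x. 0 \<le> enc m k s x) \<and> (\<Sum>x\<in>seqs n. enc m k s x) = 1)"

text \<open>Causality: the law of X^i given (M,K,S^n) depends on S^n only through S^i.\<close>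
definition causal_encoder :: "nat \<Rightarrow> nat \<Rightarrow> nat \<Rightarrow> (nat \<Rightarrow> nat \<Rightarrow> 's list \<Rightarrow> 'x list \<Rightarrow> real) \<Rightarrow> bool" where
  "causal_encoder n Mn Kn enc \<longleftrightarrow>
     (\<forall>m<Mn. \<forall>k<Kn. \<forall>s\<in>seqs n. \<forall>s'\<in>seqs n. \<forall>i\<le>n. take i s = take i s' \<longrightarrow>
        (\<forall>u\<in>seqs i. (\<Sum>x\<in>{x\<in>seqs n. take i x = u}. enc m k s x)
                   = (\<Sum>x\<in>{x\<in>seqs n. take i x = u}. enc m k s' x)))"

definition joint :: "('s \<Rightarrow> real) \<Rightarrow> ('s \<Rightarrow> 'x \<Rightarrow> 'y \<Rightarrow> 'z \<Rightarrow> real) \<Rightarrow> nat \<Rightarrow> nat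
    \<Rightarrow> (nat \<Rightarrow> nat \<Rightarrow> 's list \<Rightarrow> 'x list \<Rightarrow> real)
    \<Rightarrow> nat \<Rightarrow> nat \<Rightarrow> 's list \<Rightarrow> 'x list \<Rightarrow> 'y list \<Rightarrow> 'z list \<Rightarrow> real" where
  "joint PS W Mn Kn enc m k s x y z =
     1 / (real Mn * real Kn) * iid PS s * enc m k s x * chan_n W s x y z"

definition err_prob :: "('s \<Rightarrow> real) \<Rightarrow> ('s \<Rightarrow> 'x \<Rightarrow> 'y \<Rightarrow> 'z \<Rightarrow> real) \<Rightarrow> nat \<Rightarrow> nat \<Rightarrow> nat
    \<Rightarrow> (nat \<Rightarrow> nat \<Rightarrow> 's list \<Rightarrow> 'x list \<Rightarrow> real) \<Rightarrow> ('y list \<Rightarrow> nat \<Rightarrow> nat) \<Rightarrow> real" where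
  "err_prob PS W n Mn Kn enc dec =
     (\<Sum>m<Mn. \<Sum>k<Kn. \<Sum>s\<in>seqs n. \<Sum>x\<in>seqs n. \<Sum>y\<in>seqs n. \<Sum>z\<in>seqs n.
        joint PS W Mn Kn enc m k s x y z * (if dec y k \<noteq> m then 1 else 0))"

definition exp_cost :: "('s \<Rightarrow> real) \<Rightarrow> ('s \<Rightarrow> 'x \<Rightarrow> 'y \<Rightarrow> 'z \<Rightarrow> real) \<Rightarrow> ('x \<Rightarrow> real) \<Rightarrow> nat \<Rightarrow> nat \<Rightarrow> nat
    \<Rightarrow> (nat \<Rightarrow> nat \<Rightarrow> 's list \<Rightarrow> 'x list \<Rightarrow> real) \<Rightarrow> real" where
  "exp_cost PS W b n Mn Kn enc =
     (\<Sum>m<Mn. \<Sum>k<Kn. \<Sum>s\<in>seqs n. \<Sum>x\<in>seqs n. \<Sum>y\<in>seqs n. \<Sum>z\<in>seqs n.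
        joint PS W Mn Kn enc m k s x y z * ((1 / real n) * (\<Sum>i<n. b (x!i))))"

definition warden_out :: "('s \<Rightarrow> real) \<Rightarrow> ('s \<Rightarrow> 'x \<Rightarrow> 'y \<Rightarrow> 'z \<Rightarrow> real) \<Rightarrow> nat \<Rightarrow> nat \<Rightarrow> nat
    \<Rightarrow> (nat \<Rightarrow> nat \<Rightarrow> 's list \<Rightarrow> 'x list \<Rightarrow> real) \<Rightarrow> 'z list \<Rightarrow> real" where
  "warden_out PS W n Mn Kn enc z =
     (\<Sum>m<Mn. \<Sum>k<Kn. \<Sum>s\<in>seqs n. \<Sum>x\<in>seqs n. \<Sum>y\<in>seqs n.
        joint PS W Mn Kn enc m k s x y z)"

definition Q0 :: "('s::finite \<Rightarrow> real) \<Rightarrow> ('s \<Rightarrow> 'x \<Rightarrow> 'y::finite \<Rightarrow> 'z \<Rightarrow> real) \<Rightarrow> 'x \<Rightarrow> 'z \<Rightarrow> real" where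
  "Q0 PS W x0 z = (\<Sum>s\<in>UNIV. PS s * (\<Sum>y\<in>UNIV. W s x0 y z))"

definition rel_entropy :: "('a \<Rightarrow> real) \<Rightarrow> ('a \<Rightarrow> real) \<Rightarrow> 'a set \<Rightarrow> ereal" where
  "rel_entropy P Q A =
     (if \<exists>a\<in>A. P a > 0 \<and> Q a = 0 then \<infinity>
      else ereal (\<Sum>a\<in>A. if P a = 0 then 0 else P a * log 2 (P a / Q a)))"

text \<open>Covert achievability; causal = True for causal CSI, False for noncausal CSI.\<close>
definition covert_achievable :: "bool \<Rightarrow> ('s::finite \<Rightarrow> real) \<Rightarrow> ('s \<Rightarrow> 'x::finite \<Rightarrow> 'y::finite \<Rightarrow> 'z::finite \<Rightarrow> real)
    \<Rightarrow> 'x \<Rightarrow> ('x \<Rightarrow> real) \<Rightarrow> real \<Rightarrow> real \<Rightarrow> real \<Rightarrow> bool" where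
  "covert_achievable causal PS W x0 b B RK R \<longleftrightarrow>
     (\<exists>(enc :: nat \<Rightarrow> nat \<Rightarrow> nat \<Rightarrow> 's list \<Rightarrow> 'x list \<Rightarrow> real) (dec :: nat \<Rightarrow> 'y list \<Rightarrow> nat \<Rightarrow> nat).
        (\<forall>n. valid_encoder n (num_msgs n R) (num_keys n RK) (enc n)
             \<and> (causal \<longrightarrow> causal_encoder n (num_msgs n R) (num_keys n RK) (enc n)))
      \<and> limsup (\<lambda>n. ereal (exp_cost PS W b n (num_msgs n R) (num_keys n RK) (enc n))) \<le> ereal B
      \<and> (\<lambda>n. err_prob PS W n (num_msgs n R) (num_keys n RK) (enc n) (dec n)) \<longlonglongrightarrow> 0
      \<and> (\<lambda>n. rel_entropy (warden_out PS W n (num_msgs n R) (num_keys n RK) (enc n))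
                          (iid (Q0 PS W x0)) (seqs n)) \<longlonglongrightarrow> 0)"

definition covert_capacity :: "bool \<Rightarrow> ('s::finite \<Rightarrow> real) \<Rightarrow> ('s \<Rightarrow> 'x::finite \<Rightarrow> 'y::finite \<Rightarrow> 'z::finite \<Rightarrow> real)
    \<Rightarrow> 'x \<Rightarrow> ('x \<Rightarrow> real) \<Rightarrow> real \<Rightarrow> real \<Rightarrow> real" where
  "covert_capacity causal PS W x0 b B RK = Sup {R. covert_achievable causal PS W x0 b B RK R}"

text \<open>The binary example: True = 1, False = 0.\<close>
definition bern :: "real \<Rightarrow> bool \<Rightarrow> real" where
  "bern p s = (if s then p else 1 - p)"

definition xor_chan :: "bool \<Rightarrow> bool \<Rightarrow> bool \<Rightarrow> bool \<Rightarrow> real" where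
  "xor_chan s x y z = (if y = (x \<noteq> s) \<and> z = (x \<noteq> s) then 1 else 0)"

definition Hb :: "real \<Rightarrow> real" where
  "Hb p = p * log 2 (1 / p) + (1 - p) * log 2 (1 / (1 - p))"

end

theory Submission
  imports Defs
begin


lemma finite_seqs[simp]: "finite (seqs n :: ('a::finite) list set)"
  unfolding seqs_def using finite_lists_length_eq[of "UNIV :: 'a set" n] by simp

lemma seqs_Suc: "seqs (Suc n) = (\<lambda>(a,z). a # z) ` (UNIV \<times> seqs n)"
  unfolding seqs_def by (auto simp: length_Suc_conv)

lemma sum_iid: "(\<Sum>z\<in>seqs n. iid f z) = (\<Sum>a\<in>(UNIV::('a::finite) set). f a) ^ n"
proof (induction n)
  case 0
  have "seqs 0 = {[]}" by (auto simp: seqs_def)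
  then show ?case by (simp add: iid_def seqs_def)
next
  case (Suc n)
  have inj: "inj_on (\<lambda>(a,z). a # z) (UNIV \<times> (seqs n :: 'a list set))"
    by (auto simp: inj_on_def)
  have "(\<Sum>z\<in>seqs (Suc n). iid f z) = (\<Sum>(a,z)\<in>UNIV \<times> seqs n. iid f (a # z))"
    unfolding seqs_Suc by (subst sum.reindex[OF inj]) (simp add: case_prod_unfold)
  also have "\<dots> = (\<Sum>a\<in>UNIV. \<Sum>z\<in>seqs n. f a * iid f z)"
    by (simp add: sum.cartesian_product[symmetric] iid_def)
  also have "\<dots> = (\<Sum>a\<in>UNIV. f a) * (\<Sum>z\<in>seqs n. iid f z)"
    by (simp add: sum_distrib_left sum_distrib_right) (rule sum.swap)
  finally show ?case using Suc by simp
qed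

lemma iid_pos: "(\<And>a. f a > 0) \<Longrightarrow> iid f z > 0"
  unfolding iid_def by (induction z) auto

lemma iid_nonneg: "(\<And>a. f a \<ge> 0) \<Longrightarrow> iid f z \<ge> 0"
  unfolding iid_def by (induction z) auto

lemma iid_powr: "(\<And>a. f a > 0) \<Longrightarrow> iid f z powr u = iid (\<lambda>a. f a powr u) z"
  unfolding iid_def by (induction z) (auto simp: powr_mult prod_list_nonneg)



definition vx :: "bool list \<Rightarrow> bool list \<Rightarrow> bool list" where
  "vx x s = map2 (\<lambda>a b. a \<noteq> b) x s"

lemma vx_len[simp]: "length (vx x s) = min (length x) (length s)"
  by (simp add: vx_def)

lemma vx_seqs[simp]: "x \<in> seqs n \<Longrightarrow> s \<in> seqs n \<Longrightarrow> vx x s \<in> seqs n"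
  by (simp add: seqs_def)

lemma vx_nth: "i < length x \<Longrightarrow> i < length s \<Longrightarrow> vx x s ! i = (x!i \<noteq> s!i)"
  by (simp add: vx_def)

lemma chan_xor:
  assumes "s \<in> seqs n" "x \<in> seqs n" "y \<in> seqs n" "z \<in> seqs n"
  shows "chan_n xor_chan s x y z = (if y = vx x s \<and> z = vx x s then 1 else 0)"
proof (cases "y = vx x s \<and> z = vx x s")
  case True
  then show ?thesis using assms
    by (auto simp: chan_n_def xor_chan_def seqs_def vx_nth intro!: prod.neutral)
next
  case False
  then have "\<exists>i<n. y!i \<noteq> vx x s ! i \<or> z!i \<noteq> vx x s ! i"
    using assms by (auto simp: seqs_def list_eq_iff_nth_eq)
  then obtain i where i0: "i < n" "y!i \<noteq> vx x s ! i \<or> z!i \<noteq> vx x s ! i" by blast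
  have "vx x s ! i = (x!i \<noteq> s!i)" using assms i0 by (simp add: seqs_def vx_nth)
  then have i: "i < n" "\<not> (y!i = (x!i \<noteq> s!i) \<and> z!i = (x!i \<noteq> s!i))"
    using i0 by auto
  have "chan_n xor_chan s x y z = 0" unfolding chan_n_def
    using assms i by (auto simp: seqs_def xor_chan_def intro!: prod_zero bexI[of _ i])
  then show ?thesis using False by simp
qed

lemma sum_chan:
  assumes "s \<in> seqs n" "x \<in> seqs n"
  shows "(\<Sum>y\<in>seqs n. \<Sum>z\<in>seqs n. c * chan_n xor_chan s x y z * F y z) = c * F (vx x s) (vx x s)"
proof -
  have "(\<Sum>y\<in>seqs n. \<Sum>z\<in>seqs n. c * chan_n xor_chan s x y z * F y z)
      = (\<Sum>y\<in>seqs n. \<Sum>z\<in>seqs n. if y = vx x s then (if z = vx x s then c * F y z else 0) else 0)"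
    using assms by (intro sum.cong refl) (auto simp: chan_xor)
  also have "\<dots> = (\<Sum>y\<in>seqs n. if y = vx x s then c * F y (vx x s) else 0)"
    using assms by (intro sum.cong refl) simp
  also have "\<dots> = c * F (vx x s) (vx x s)" using assms by simp
  finally show ?thesis .
qed

lemma sum_chan1:
  assumes "s \<in> seqs n" "x \<in> seqs n" "z \<in> seqs n"
  shows "(\<Sum>y\<in>seqs n. c * chan_n xor_chan s x y z) = (if z = vx x s then c else 0)"
proof -
  have "(\<Sum>y\<in>seqs n. c * chan_n xor_chan s x y z)
      = (\<Sum>y\<in>seqs n. if y = vx x s then (if z = vx x s then c else 0) else 0)"
    using assms by (intro sum.cong refl) (auto simp: chan_xor)
  also have "\<dots> = (if z = vx x s then c else 0)" using assms by simp
  finally show ?thesis .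
qed

definition PP :: "real \<Rightarrow> nat \<Rightarrow> (bool list \<Rightarrow> bool list \<Rightarrow> real) \<Rightarrow> bool list \<Rightarrow> real" where
  "PP p n e z = (\<Sum>s\<in>seqs n. \<Sum>x\<in>seqs n. iid (bern p) s * e s x * (if vx x s = z then 1 else 0))"

lemma PP_sum:
  "(\<Sum>z\<in>seqs n. PP p n e z * g z) = (\<Sum>s\<in>seqs n. \<Sum>x\<in>seqs n. iid (bern p) s * e s x * g (vx x s))"
proof -
  have "(\<Sum>z\<in>seqs n. PP p n e z * g z)
     = (\<Sum>z\<in>seqs n. \<Sum>s\<in>seqs n. \<Sum>x\<in>seqs n. iid (bern p) s * e s x * (if vx x s = z then g z else 0))"
    unfolding PP_def sum_distrib_right by (intro sum.cong refl) auto
  also have "\<dots> = (\<Sum>s\<in>seqs n. \<Sum>x\<in>seqs n. \<Sum>z\<in>seqs n. iid (bern p) s * e s x * (if vx x s = z then g z else 0))"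
    by (subst sum.swap) (rule sum.cong[OF refl], rule sum.swap)
  also have "\<dots> = (\<Sum>s\<in>seqs n. \<Sum>x\<in>seqs n. iid (bern p) s * e s x * g (vx x s))"
    by (intro sum.cong refl) (simp add: sum_distrib_left[symmetric])
  finally show ?thesis .
qed



lemma err_eq:
  "err_prob (bern p) xor_chan n Mn Kn enc dec =
     (\<Sum>m<Mn. \<Sum>k<Kn. 1 / (real Mn * real Kn) * (\<Sum>z\<in>seqs n. PP p n (enc m k) z * (if dec z k \<noteq> m then 1 else 0)))"
  unfolding err_prob_def PP_sum joint_def sum_distrib_left
proof (intro sum.cong refl)
  fix m k :: nat and s x :: "bool list" assume s: "s \<in> seqs n" and x: "x \<in> seqs n"
  have "(\<Sum>y\<in>seqs n. \<Sum>z\<in>seqs n. 1 / (real Mn * real Kn) * iid (bern p) s * enc m k s x * chan_n xor_chan s x y z *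
            (if dec y k \<noteq> m then 1 else 0))
     = (1 / (real Mn * real Kn) * iid (bern p) s * enc m k s x) * (if dec (vx x s) k \<noteq> m then 1 else 0)"
    using sum_chan[OF s x, of "1 / (real Mn * real Kn) * iid (bern p) s * enc m k s x" "\<lambda>y z. if dec y k \<noteq> m then 1 else 0"]
    by simp
  then show "(\<Sum>y\<in>seqs n. \<Sum>z\<in>seqs n. 1 / (real Mn * real Kn) * iid (bern p) s * enc m k s x * chan_n xor_chan s x y z *
            (if dec y k \<noteq> m then 1 else 0))
     = 1 / (real Mn * real Kn) * (iid (bern p) s * enc m k s x * (if dec (vx x s) k \<noteq> m then 1 else 0))"
    by simp
qed

lemma warden_eq:
  assumes "z \<in> seqs n"
  shows "warden_out (bern p) xor_chan n Mn Kn enc z =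
     (\<Sum>m<Mn. \<Sum>k<Kn. 1 / (real Mn * real Kn) * PP p n (enc m k) z)"
  unfolding warden_out_def joint_def
proof (intro sum.cong refl)
  fix m k :: nat
  have "(\<Sum>s\<in>seqs n. \<Sum>x\<in>seqs n. \<Sum>y\<in>seqs n.
          1 / (real Mn * real Kn) * iid (bern p) s * enc m k s x * chan_n xor_chan s x y z)
      = (\<Sum>s\<in>seqs n. \<Sum>x\<in>seqs n. 1 / (real Mn * real Kn) * (iid (bern p) s * enc m k s x * (if vx x s = z then 1 else 0)))"
  proof (intro sum.cong refl)
    fix s x :: "bool list" assume s: "s \<in> seqs n" and x: "x \<in> seqs n"
    show "(\<Sum>y\<in>seqs n. 1 / (real Mn * real Kn) * iid (bern p) s * enc m k s x * chan_n xor_chan s x y z)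
      = 1 / (real Mn * real Kn) * (iid (bern p) s * enc m k s x * (if vx x s = z then 1 else 0))"
      using sum_chan1[OF s x assms, of "1 / (real Mn * real Kn) * iid (bern p) s * enc m k s x"]
      by auto
  qed
  also have "\<dots> = 1 / (real Mn * real Kn) * PP p n (enc m k) z"
    unfolding PP_def sum_distrib_left by simp
  finally show "(\<Sum>s\<in>seqs n. \<Sum>x\<in>seqs n. \<Sum>y\<in>seqs n.
          1 / (real Mn * real Kn) * iid (bern p) s * enc m k s x * chan_n xor_chan s x y z)
        = 1 / (real Mn * real Kn) * PP p n (enc m k) z" .
qed

lemma sum_bern[simp]: "(\<Sum>a\<in>UNIV. bern p a) = 1"
  by (simp add: UNIV_bool bern_def)

lemma bern_pos: "0 < p \<Longrightarrow> p < 1 \<Longrightarrow> bern p a > 0"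
  by (simp add: bern_def)

lemma PP_nonneg:
  assumes "0 \<le> p" "p \<le> 1" "\<forall>s\<in>seqs n. \<forall>x. 0 \<le> e s x"
  shows "0 \<le> PP p n e z"
  unfolding PP_def using assms
  by (intro sum_nonneg mult_nonneg_nonneg iid_nonneg) (auto simp: bern_def)

lemma PP_total:
  assumes "\<forall>s\<in>seqs n. (\<Sum>x\<in>seqs n. e s x) = 1"
  shows "(\<Sum>z\<in>seqs n. PP p n e z) = 1"
proof -
  have "(\<Sum>z\<in>seqs n. PP p n e z) = (\<Sum>z\<in>seqs n. PP p n e z * 1)" by simp
  also have "\<dots> = (\<Sum>s\<in>seqs n. \<Sum>x\<in>seqs n. iid (bern p) s * e s x * 1)" by (rule PP_sum)
  also have "\<dots> = (\<Sum>s\<in>seqs n. iid (bern p) s)"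
    using assms by (simp add: sum_distrib_left[symmetric])
  also have "\<dots> = 1" by (simp add: sum_iid)
  finally show ?thesis .
qed



lemma Q0_bern: "Q0 (bern p) xor_chan False = bern p"
  by (rule ext) (simp add: Q0_def UNIV_bool xor_chan_def bern_def)

definition Dn :: "('a \<Rightarrow> real) \<Rightarrow> ('a \<Rightarrow> real) \<Rightarrow> 'a set \<Rightarrow> real" where
  "Dn P Q A = (\<Sum>a\<in>A. if P a = 0 then 0 else P a * ln (P a / Q a))"

lemma rel_entropy_Dn:
  assumes "\<forall>a\<in>A. Q a > 0"
  shows "rel_entropy P Q A = ereal (Dn P Q A / ln 2)"
  using assms unfolding rel_entropy_def Dn_def
  by (auto simp: log_def sum_divide_distrib intro!: sum.cong)

lemma young:
  fixes P Q g :: real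
  assumes "P \<ge> 0" "Q > 0"
  shows "P * g - Q * exp (g - 1) \<le> (if P = 0 then 0 else P * ln (P / Q))"
proof (cases "P = 0")
  case True
  have "0 \<le> Q * exp (g - 1)" using assms(2) by (intro mult_nonneg_nonneg) auto
  then show ?thesis using True by simp
next
  case False
  then have P: "P > 0" using assms by simp
  have "ln (Q * exp (g - 1) / P) \<le> Q * exp (g - 1) / P - 1"
    using P assms by (intro ln_le_minus_one) auto
  moreover have "ln (Q * exp (g - 1) / P) = ln Q + (g - 1) - ln P"
    using P assms by (simp add: ln_div ln_mult)
  ultimately have "P * (ln Q + (g - 1) - ln P) \<le> P * (Q * exp (g - 1) / P - 1)"
    using P by (intro mult_left_mono) auto
  then have "P * g - Q * exp (g - 1) \<le> P * (ln P - ln Q)"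
    using P by (simp add: algebra_simps)
  then show ?thesis using P assms False by (simp add: ln_div)
qed

lemma Dn_event:
  assumes fin: "finite Z" and E: "E \<subseteq> Z"
    and P: "\<forall>z\<in>Z. P z \<ge> 0" and Q: "\<forall>z\<in>Z. Q z > 0"
    and sP: "(\<Sum>z\<in>Z. P z) = 1" and sQ: "(\<Sum>z\<in>Z. Q z) = 1"
  shows "L * (\<Sum>z\<in>E. P z) - exp L * (\<Sum>z\<in>E. Q z) \<le> Dn P Q Z"
proof -
  define g where "g z = 1 + (if z \<in> E then L else 0)" for z
  have "(\<Sum>z\<in>Z. P z * g z - Q z * exp (g z - 1)) \<le> Dn P Q Z"
    unfolding Dn_def using P Q by (intro sum_mono young) auto
  moreover have "(\<Sum>z\<in>Z. P z * g z) = 1 + L * (\<Sum>z\<in>E. P z)"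
  proof -
    have "(\<Sum>z\<in>Z. P z * g z) = (\<Sum>z\<in>Z. P z) + L * (\<Sum>z\<in>Z. if z \<in> E then P z else 0)"
      unfolding g_def sum_distrib_left sum.distrib[symmetric] by (intro sum.cong refl) (auto simp: algebra_simps)
    also have "(\<Sum>z\<in>Z. if z \<in> E then P z else 0) = (\<Sum>z\<in>E. P z)"
      using fin E by (simp add: sum.inter_restrict[symmetric] Int_absorb1)
    finally show ?thesis using sP by simp
  qed
  moreover have "(\<Sum>z\<in>Z. Q z * exp (g z - 1)) = (\<Sum>z\<in>Z. Q z) + (exp L - 1) * (\<Sum>z\<in>E. Q z)"
  proof -
    have "(\<Sum>z\<in>Z. Q z * exp (g z - 1)) = (\<Sum>z\<in>Z. Q z + (exp L - 1) * (if z \<in> E then Q z else 0))"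
      unfolding g_def by (intro sum.cong refl) (auto simp: algebra_simps)
    also have "\<dots> = (\<Sum>z\<in>Z. Q z) + (exp L - 1) * (\<Sum>z\<in>Z. if z \<in> E then Q z else 0)"
      by (simp add: sum.distrib sum_distrib_left)
    also have "(\<Sum>z\<in>Z. if z \<in> E then Q z else 0) = (\<Sum>z\<in>E. Q z)"
      using fin E by (simp add: sum.inter_restrict[symmetric] Int_absorb1)
    finally show ?thesis .
  qed
  moreover have "(\<Sum>z\<in>E. Q z) \<ge> 0" using Q E by (intro sum_nonneg) (auto simp: less_imp_le subset_iff)
  ultimately show ?thesis using sQ by (simp add: sum_subtractf algebra_simps)
qed

lemma Dn_nonneg:
  assumes "finite Z" "\<forall>z\<in>Z. P z \<ge> 0" "\<forall>z\<in>Z. Q z > 0"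
    "(\<Sum>z\<in>Z. P z) = 1" "(\<Sum>z\<in>Z. Q z) = 1"
  shows "0 \<le> Dn P Q Z"
  using Dn_event[OF assms(1) empty_subsetI assms(2-5), of 0] by simp

lemma Dn_upper:
  assumes "finite Z" "\<forall>z\<in>Z. P z \<ge> 0" "\<forall>z\<in>Z. Q z > 0"
    "(\<Sum>z\<in>Z. P z) = 1" "\<forall>z\<in>Z. P z \<le> \<rho> * Q z"
  shows "Dn P Q Z \<le> ln \<rho>"
proof -
  have "Dn P Q Z \<le> (\<Sum>z\<in>Z. P z * ln \<rho>)"
    unfolding Dn_def
  proof (intro sum_mono)
    fix z assume z: "z \<in> Z"
    show "(if P z = 0 then 0 else P z * ln (P z / Q z)) \<le> P z * ln \<rho>"
    proof (cases "P z = 0")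
      case True then show ?thesis by simp
    next
      case False
      then have "P z > 0" using assms z by force
      moreover have "P z / Q z \<le> \<rho>" using assms z by (simp add: divide_le_eq)
      moreover have "Q z > 0" using assms z by auto
      ultimately have "ln (P z / Q z) \<le> ln \<rho>" by (metis divide_pos_pos less_le_trans ln_le_cancel_iff)
      then show ?thesis using False \<open>P z > 0\<close> by (auto intro!: mult_left_mono)
    qed
  qed
  also have "\<dots> = ln \<rho>" using assms by (simp add: sum_distrib_right[symmetric])
  finally show ?thesis .
qed



definition FF :: "real \<Rightarrow> real \<Rightarrow> real" where
  "FF p u = exp ((1 + u) * ln p) + exp ((1 + u) * ln (1 - p))"

definition HH :: "real \<Rightarrow> real" where
  "HH p = - (p * ln p + (1 - p) * ln (1 - p))"

lemma sum_bern_powr: "0 < p \<Longrightarrow> p < 1 \<Longrightarrow> (\<Sum>a\<in>UNIV. bern p a powr u) = p powr u + (1 - p) powr u"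
  by (simp add: UNIV_bool bern_def)

lemma FF_eq: "0 < p \<Longrightarrow> p < 1 \<Longrightarrow> FF p u = p powr (1 + u) + (1 - p) powr (1 + u)"
  by (simp add: FF_def powr_def)

lemma chernoff:
  assumes p: "0 < p" "p < 1" and c: "c > 0" and E: "E \<subseteq> seqs n"
    and ge: "\<forall>z\<in>E. (iid (bern p) z / c) powr u \<ge> 1"
  shows "(\<Sum>z\<in>E. iid (bern p) z) \<le> c powr (-u) * FF p u ^ n"
proof -
  have pos: "\<And>z. iid (bern p) z > 0" using p by (intro iid_pos bern_pos)
  have "(\<Sum>z\<in>E. iid (bern p) z) \<le> (\<Sum>z\<in>E. iid (bern p) z * (iid (bern p) z / c) powr u)"
    using ge pos by (intro sum_mono) (metis less_imp_le mult_cancel_left1 mult_left_mono)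
  also have "\<dots> \<le> (\<Sum>z\<in>seqs n. iid (bern p) z * (iid (bern p) z / c) powr u)"
    using E pos c by (intro sum_mono2) (auto intro!: less_imp_le mult_pos_pos simp: less_le)
  also have "\<dots> = (\<Sum>z\<in>seqs n. c powr (-u) * iid (\<lambda>a. bern p a powr (1 + u)) z)"
  proof (intro sum.cong refl)
    fix z
    have "iid (bern p) z * (iid (bern p) z / c) powr u = c powr (-u) * (iid (bern p) z powr 1 * iid (bern p) z powr u)"
      using pos[of z] c by (simp add: powr_divide powr_minus field_simps)
    also have "\<dots> = c powr (-u) * iid (bern p) z powr (1 + u)"
      by (simp add: powr_add)
    also have "\<dots> = c powr (-u) * iid (\<lambda>a. bern p a powr (1 + u)) z"
      using p by (subst iid_powr) (auto intro: bern_pos)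
    finally show "iid (bern p) z * (iid (bern p) z / c) powr u = c powr (-u) * iid (\<lambda>a. bern p a powr (1 + u)) z" .
  qed
  also have "\<dots> = c powr (-u) * FF p u ^ n"
    using p by (simp add: sum_distrib_left[symmetric] sum_iid sum_bern_powr FF_eq)
  finally show ?thesis .
qed

lemma hh_deriv:
  assumes p: "0 < p" "p < 1"
  shows "((\<lambda>u. FF p u * exp (u * HH p)) has_real_derivative 0) (at 0)"
proof -
  have "((\<lambda>u. FF p u * exp (u * HH p)) has_real_derivative
         ((exp ((1 + 0) * ln p) * ln p + exp ((1 + 0) * ln (1 - p)) * ln (1 - p)) * exp (0 * HH p)
          + FF p 0 * (exp (0 * HH p) * HH p))) (at 0)"
    unfolding FF_def by (auto intro!: derivative_eq_intros)
  moreover have "(exp ((1 + 0) * ln p) * ln p + exp ((1 + 0) * ln (1 - p)) * ln (1 - p)) * exp (0 * HH p)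
          + FF p 0 * (exp (0 * HH p) * HH p) = 0"
    using p by (simp add: FF_def HH_def)
  ultimately show ?thesis by simp
qed

lemma hh_small:
  assumes p: "0 < p" "p < 1" and d: "\<delta> > 0"
  shows "\<exists>t>0. FF p t * exp (t * HH p) < exp (t * \<delta>) \<and> FF p (-t) * exp (- t * HH p) < exp (t * \<delta>)"
proof -
  let ?h = "\<lambda>u. FF p u * exp (u * HH p)"
  have h0: "?h 0 = 1" using p by (simp add: FF_def)
  have "((\<lambda>y. (?h y - ?h 0) / (y - 0)) \<longlongrightarrow> 0) (at 0)"
    using hh_deriv[OF p] by (simp add: has_field_derivative_iff)
  then have "eventually (\<lambda>y. dist ((?h y - ?h 0) / (y - 0)) 0 < \<delta>) (at 0)"
    using d by (rule tendstoD)
  then obtain r where r: "r > 0" "\<And>y. y \<noteq> 0 \<Longrightarrow> dist y 0 < r \<Longrightarrow> \<bar>(?h y - 1) / y\<bar> < \<delta>"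
    unfolding eventually_at using h0 by auto
  define t where "t = r / 2"
  have t: "t > 0" "t < r" using r by (auto simp: t_def)
  have key: "?h y < exp (\<bar>y\<bar> * \<delta>)" if "y \<noteq> 0" "\<bar>y\<bar> < r" for y
  proof -
    have "\<bar>(?h y - 1) / y\<bar> < \<delta>" using r(2)[of y] that by simp
    then have "\<bar>?h y - 1\<bar> < \<delta> * \<bar>y\<bar>" using that by (simp add: abs_divide divide_less_eq)
    then have "?h y < 1 + \<bar>y\<bar> * \<delta>" by (simp add: algebra_simps)
    also have "\<dots> \<le> exp (\<bar>y\<bar> * \<delta>)" by (rule exp_ge_add_one_self[THEN order_trans[rotated]]) simp
    finally show ?thesis .
  qed
  show ?thesis
    using key[of t] key[of "-t"] t by (intro exI[of _ t]) auto
qed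



lemma count_le_one: "(\<Sum>m<(M::nat). if d = m then 1 else (0::real)) \<le> 1"
  by (cases "d < M") auto

lemma conv_core:
  fixes P :: "nat \<Rightarrow> nat \<Rightarrow> 'z \<Rightarrow> real"
  assumes Z: "finite Z" and A: "A \<subseteq> Z" and M: "M > 0" and K: "K > 0"
    and nn: "\<And>m k z. m < M \<Longrightarrow> k < K \<Longrightarrow> z \<in> Z \<Longrightarrow> 0 \<le> P m k z"
    and s1: "\<And>m k. m < M \<Longrightarrow> k < K \<Longrightarrow> (\<Sum>z\<in>Z. P m k z) = 1"
  shows "1 - (\<Sum>m<M. \<Sum>k<K. 1 / (real M * real K) * (\<Sum>z\<in>Z. P m k z * (if d z k \<noteq> m then 1 else 0)))
         \<le> real (card A) / real M + (\<Sum>z\<in>Z - A. \<Sum>m<M. \<Sum>k<K. 1 / (real M * real K) * P m k z)"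
proof -
  define c where "c = 1 / (real M * real K)"
  have c: "c > 0" using M K by (simp add: c_def)
  define S where "S m k = (\<Sum>z\<in>Z. P m k z * (if d z k = m then 1 else 0))" for m k
  have le1: "P m k z \<le> 1" if "m < M" "k < K" "z \<in> Z" for m k z
  proof -
    have "P m k z \<le> (\<Sum>z\<in>Z. P m k z)" using that Z nn by (intro member_le_sum) auto
    then show ?thesis using s1 that by simp
  qed
  have err: "(\<Sum>z\<in>Z. P m k z * (if d z k \<noteq> m then 1 else 0)) = 1 - S m k" if "m < M" "k < K" for m k
  proof -
    have "(\<Sum>z\<in>Z. P m k z * (if d z k \<noteq> m then 1 else 0)) = (\<Sum>z\<in>Z. P m k z - P m k z * (if d z k = m then 1 else 0))"
      by (intro sum.cong refl) auto
    then show ?thesis using s1[OF that] by (simp add: S_def sum_subtractf)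
  qed
  have tot: "(\<Sum>m<M. \<Sum>k<K. c) = 1" using M K by (simp add: c_def)
  have "1 - (\<Sum>m<M. \<Sum>k<K. c * (\<Sum>z\<in>Z. P m k z * (if d z k \<noteq> m then 1 else 0)))
        = 1 - (\<Sum>m<M. \<Sum>k<K. c * (1 - S m k))"
    using err by (intro arg_cong[where f = "\<lambda>x. 1 - x"] sum.cong refl) auto
  also have "\<dots> = (\<Sum>m<M. \<Sum>k<K. c * S m k)"
  proof -
    have "(\<Sum>m<M. \<Sum>k<K. c * (1 - S m k)) = (\<Sum>m<M. \<Sum>k<K. c) - (\<Sum>m<M. \<Sum>k<K. c * S m k)"
      by (simp add: right_diff_distrib sum_subtractf)
    then show ?thesis using tot by simp
  qed
  also have "\<dots> \<le> (\<Sum>m<M. \<Sum>k<K. c * ((\<Sum>z\<in>A. if d z k = m then 1 else 0) + (\<Sum>z\<in>Z - A. P m k z)))"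
  proof (intro sum_mono mult_left_mono)
    fix m k assume mk: "m \<in> {..<M}" "k \<in> {..<K}"
    have "S m k = (\<Sum>z\<in>A. P m k z * (if d z k = m then 1 else 0)) + (\<Sum>z\<in>Z - A. P m k z * (if d z k = m then 1 else 0))"
      unfolding S_def by (subst sum.subset_diff[OF A Z]) simp
    also have "\<dots> \<le> (\<Sum>z\<in>A. if d z k = m then 1 else 0) + (\<Sum>z\<in>Z - A. P m k z)"
    proof (intro add_mono sum_mono)
      fix z assume "z \<in> A"
      then show "P m k z * (if d z k = m then 1 else 0) \<le> (if d z k = m then 1 else 0)"
        using le1[of m k z] mk A by auto
    next
      fix z assume "z \<in> Z - A"
      then show "P m k z * (if d z k = m then 1 else 0) \<le> P m k z"
        using nn[of m k z] mk by auto
    qed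
    finally show "S m k \<le> (\<Sum>z\<in>A. if d z k = m then 1 else 0) + (\<Sum>z\<in>Z - A. P m k z)" .
  qed (use c in auto)
  also have "\<dots> = (\<Sum>m<M. \<Sum>k<K. c * (\<Sum>z\<in>A. if d z k = m then 1 else 0))
                 + (\<Sum>m<M. \<Sum>k<K. c * (\<Sum>z\<in>Z - A. P m k z))"
    by (simp add: distrib_left sum.distrib)
  also have "(\<Sum>m<M. \<Sum>k<K. c * (\<Sum>z\<in>A. if d z k = m then 1 else 0))
           = c * (\<Sum>k<K. \<Sum>z\<in>A. \<Sum>m<M. if d z k = m then 1 else 0)"
  proof -
    have "(\<Sum>m<M. \<Sum>k<K. c * (\<Sum>z\<in>A. if d z k = m then 1 else 0))
        = c * (\<Sum>m<M. \<Sum>k<K. \<Sum>z\<in>A. if d z k = m then 1 else 0)"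
      by (simp add: sum_distrib_left)
    also have "\<dots> = c * (\<Sum>k<K. \<Sum>m<M. \<Sum>z\<in>A. if d z k = m then 1 else 0)"
      by (subst sum.swap) (rule refl)
    also have "\<dots> = c * (\<Sum>k<K. \<Sum>z\<in>A. \<Sum>m<M. if d z k = m then 1 else 0)"
      by (intro arg_cong[where f="(*) c"] sum.cong refl sum.swap)
    finally show ?thesis .
  qed
  also have "\<dots> \<le> c * (\<Sum>k<K. \<Sum>z\<in>A. (1::real))"
    using c by (intro mult_left_mono sum_mono count_le_one) auto
  also have "\<dots> = real (card A) / real M" using K by (simp add: c_def)
  also have "(\<Sum>m<M. \<Sum>k<K. c * (\<Sum>z\<in>Z - A. P m k z)) = (\<Sum>z\<in>Z - A. \<Sum>m<M. \<Sum>k<K. c * P m k z)"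
  proof -
    have "(\<Sum>m<M. \<Sum>k<K. c * (\<Sum>z\<in>Z - A. P m k z)) = (\<Sum>m<M. \<Sum>k<K. \<Sum>z\<in>Z - A. c * P m k z)"
      by (simp add: sum_distrib_left)
    also have "\<dots> = (\<Sum>m<M. \<Sum>z\<in>Z - A. \<Sum>k<K. c * P m k z)"
      by (intro sum.cong refl sum.swap)
    also have "\<dots> = (\<Sum>z\<in>Z - A. \<Sum>m<M. \<Sum>k<K. c * P m k z)"
      by (rule sum.swap)
    finally show ?thesis .
  qed
  finally show ?thesis by (simp add: c_def)
qed



lemma Hb_HH: "0 < p \<Longrightarrow> p < 1 \<Longrightarrow> Hb p = HH p / ln 2"
  by (simp add: Hb_def HH_def log_def ln_div divide_simps)

lemma num_keys_pos: "0 \<le> RK \<Longrightarrow> num_keys n RK > 0"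
proof -
  assume "0 \<le> RK"
  then have "2 powr (real n * RK) \<ge> 1" by (intro ge_one_powr_ge_zero) auto
  then have "\<lfloor>2 powr (real n * RK)\<rfloor> \<ge> 1" by (simp add: one_le_floor)
  then show ?thesis by (simp add: num_keys_def)
qed

lemma num_msgs_ge: "real (num_msgs n R) \<ge> 2 powr (real n * R)"
proof -
  have "real_of_int \<lceil>2 powr (real n * R)\<rceil> \<ge> 2 powr (real n * R)" by (rule le_of_int_ceiling)
  moreover have "\<lceil>2 powr (real n * R)\<rceil> \<ge> 0" by (simp add: ceiling_le_zero) (smt (verit) powr_gt_zero)
  ultimately show ?thesis by (simp add: num_msgs_def)
qed

lemma num_msgs_pos: "num_msgs n R > 0"
proof -
  have "(0::real) < 2 powr (real n * R)" by simp
  also have "\<dots> \<le> real (num_msgs n R)" by (rule num_msgs_ge)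
  finally show ?thesis by simp
qed

lemma FF_pos: "FF p u > 0" by (simp add: FF_def add_pos_pos)

lemma warden_props:
  assumes p: "0 < p" "p < 1" and RK: "0 \<le> RK"
    and v: "valid_encoder n (num_msgs n R) (num_keys n RK) e"
  shows "(\<forall>z\<in>seqs n. warden_out (bern p) xor_chan n (num_msgs n R) (num_keys n RK) e z \<ge> 0)
       \<and> (\<Sum>z\<in>seqs n. warden_out (bern p) xor_chan n (num_msgs n R) (num_keys n RK) e z) = 1"
proof -
  let ?M = "num_msgs n R" and ?K = "num_keys n RK"
  have M: "?M > 0" by (rule num_msgs_pos)
  have K: "?K > 0" using RK by (rule num_keys_pos)
  have nn: "0 \<le> PP p n (e m k) z" if "m < ?M" "k < ?K" for m k z
    using v that p by (intro PP_nonneg) (auto simp: valid_encoder_def)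
  have s1: "(\<Sum>z\<in>seqs n. PP p n (e m k) z) = 1" if "m < ?M" "k < ?K" for m k
    using v that by (intro PP_total) (auto simp: valid_encoder_def)
  show ?thesis
  proof
    show "\<forall>z\<in>seqs n. warden_out (bern p) xor_chan n ?M ?K e z \<ge> 0"
      using nn by (auto simp: warden_eq intro!: sum_nonneg mult_nonneg_nonneg)
    have "(\<Sum>z\<in>seqs n. warden_out (bern p) xor_chan n ?M ?K e z)
        = (\<Sum>z\<in>seqs n. \<Sum>m<?M. \<Sum>k<?K. 1 / (real ?M * real ?K) * PP p n (e m k) z)"
      by (intro sum.cong refl) (simp add: warden_eq)
    also have "\<dots> = (\<Sum>m<?M. \<Sum>k<?K. 1 / (real ?M * real ?K) * (\<Sum>z\<in>seqs n. PP p n (e m k) z))"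
      by (subst sum.swap) (simp add: sum_distrib_left sum.swap[of _ "{..<?K}" "seqs n"])
    also have "\<dots> = (\<Sum>m<?M. \<Sum>k<?K. 1 / (real ?M * real ?K))"
      using s1 by (intro sum.cong refl) auto
    also have "\<dots> = 1" using M K by simp
    finally show "(\<Sum>z\<in>seqs n. warden_out (bern p) xor_chan n ?M ?K e z) = 1" .
  qed
qed



lemma converse:
  assumes p: "0 < p" "p < 1" and RK: "0 < RK"
    and ach: "covert_achievable cs (bern p) xor_chan False (\<lambda>_. 0) 0 RK R"
  shows "R \<le> Hb p"
proof (rule ccontr)
  assume "\<not> R \<le> Hb p"
  then have RH: "R * ln 2 > HH p" using Hb_HH[OF p] by (simp add: not_le pos_divide_less_eq)
  define \<delta> where "\<delta> = (R * ln 2 - HH p) / 2"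
  have \<delta>: "\<delta> > 0" using RH by (simp add: \<delta>_def)
  define b where "b = HH p + \<delta>"
  obtain t where t: "t > 0" "FF p (-t) * exp (- t * HH p) < exp (t * \<delta>)"
    using hh_small[OF p \<delta>] by blast
  define r where "r = FF p (-t) * exp (- t * b)"
  have r0: "r > 0" by (simp add: r_def FF_pos)
  have r1: "r < 1"
  proof -
    have "r = (FF p (-t) * exp (- t * HH p)) * exp (- (t * \<delta>))"
      by (simp add: r_def b_def algebra_simps flip: exp_add)
    also have "\<dots> < exp (t * \<delta>) * exp (- (t * \<delta>))"
      using t by (intro mult_strict_right_mono) auto
    also have "\<dots> = 1" by (simp flip: exp_add)
    finally show ?thesis .
  qed
  let ?q = "bern p"
  have qpos: "\<And>z. iid ?q z > 0" using p by (intro iid_pos bern_pos)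
  obtain enc :: "nat \<Rightarrow> nat \<Rightarrow> nat \<Rightarrow> bool list \<Rightarrow> bool list \<Rightarrow> real" and dec where
    valid: "\<And>n. valid_encoder n (num_msgs n R) (num_keys n RK) (enc n)"
    and err: "(\<lambda>n. err_prob ?q xor_chan n (num_msgs n R) (num_keys n RK) (enc n) (dec n)) \<longlonglongrightarrow> 0"
    and rel: "(\<lambda>n. rel_entropy (warden_out ?q xor_chan n (num_msgs n R) (num_keys n RK) (enc n))
                          (iid (Q0 ?q xor_chan False)) (seqs n)) \<longlonglongrightarrow> 0"
    using ach unfolding covert_achievable_def by blast
  define W where "W n = warden_out ?q xor_chan n (num_msgs n R) (num_keys n RK) (enc n)" for n
  define D where "D n = Dn (W n) (iid ?q) (seqs n)" for n
  have "(\<lambda>n. ereal (D n / ln 2)) \<longlonglongrightarrow> 0"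
    using rel qpos unfolding Q0_bern W_def[symmetric] D_def by (simp add: rel_entropy_Dn)
  then have "(\<lambda>n. D n / ln 2) \<longlonglongrightarrow> 0" by (simp add: zero_ereal_def)
  then have "(\<lambda>n. (D n / ln 2) * ln 2) \<longlonglongrightarrow> 0 * ln 2" by (intro tendsto_mult) auto
  then have Dlim: "D \<longlonglongrightarrow> 0" by simp
  define A where "A n = {z\<in>seqs n. iid ?q z \<ge> exp (- real n * b)}" for n
  define E where "E n = seqs n - A n" for n
  have QE: "(\<Sum>z\<in>E n. iid ?q z) \<le> r ^ n" for n
  proof -
    have "(\<Sum>z\<in>E n. iid ?q z) \<le> exp (- real n * b) powr (- (-t)) * FF p (-t) ^ n"
    proof (rule chernoff[OF p])
      show "E n \<subseteq> seqs n" by (auto simp: E_def)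
      show "\<forall>z\<in>E n. 1 \<le> (iid ?q z / exp (- real n * b)) powr (-t)"
      proof
        fix z assume "z \<in> E n"
        then have lt: "iid ?q z / exp (- real n * b) < 1" by (auto simp: E_def A_def)
        have pos: "iid ?q z / exp (- real n * b) > 0" using qpos by simp
        have "(iid ?q z / exp (- real n * b)) powr t \<le> 1"
          using lt pos t qpos[of z] by (intro powr_le1) (auto simp: abs_of_pos)
        moreover have "(iid ?q z / exp (- real n * b)) powr t > 0" using pos qpos[of z] by simp
        ultimately show "1 \<le> (iid ?q z / exp (- real n * b)) powr (-t)"
          by (simp add: powr_minus divide_simps)
      qed
    qed simp
    also have "\<dots> = r ^ n"
      by (simp add: r_def powr_def power_mult_distrib exp_of_nat_mult[symmetric] algebra_simps)
    finally show ?thesis .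
  qed
  have cardA: "real (card (A n)) \<le> exp (real n * b)" for n
  proof -
    have "real (card (A n)) * exp (- real n * b) = (\<Sum>z\<in>A n. exp (- real n * b))" by simp
    also have "\<dots> \<le> (\<Sum>z\<in>A n. iid ?q z)" by (intro sum_mono) (auto simp: A_def)
    also have "\<dots> \<le> (\<Sum>z\<in>seqs n. iid ?q z)"
      using qpos by (intro sum_mono2) (auto simp: A_def less_imp_le)
    also have "\<dots> = 1" by (simp add: sum_iid)
    finally have "real (card (A n)) * exp (- real n * b) \<le> 1" .
    then show ?thesis by (simp add: exp_minus field_simps)
  qed
  define U where "U n = exp (- \<delta>) ^ n + (D n + exp 1 * r ^ n)" for n
  have bound: "1 - err_prob ?q xor_chan n (num_msgs n R) (num_keys n RK) (enc n) (dec n) \<le> U n" for n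
  proof -
    let ?M = "num_msgs n R" and ?K = "num_keys n RK"
    have M: "?M > 0" by (rule num_msgs_pos)
    have K: "?K > 0" using RK by (intro num_keys_pos) auto
    have nn: "0 \<le> PP p n (enc n m k) z" if "m < ?M" "k < ?K" for m k z
      using valid[of n] that p by (intro PP_nonneg) (auto simp: valid_encoder_def)
    have s1: "(\<Sum>z\<in>seqs n. PP p n (enc n m k) z) = 1" if "m < ?M" "k < ?K" for m k
      using valid[of n] that by (intro PP_total) (auto simp: valid_encoder_def)
    have "1 - err_prob ?q xor_chan n ?M ?K (enc n) (dec n)
          \<le> real (card (A n)) / real ?M + (\<Sum>z\<in>seqs n - A n. \<Sum>m<?M. \<Sum>k<?K. 1 / (real ?M * real ?K) * PP p n (enc n m k) z)"
      unfolding err_eq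
      by (rule conv_core[OF finite_seqs _ M K nn s1]) (auto simp: A_def)
    also have "(\<Sum>z\<in>seqs n - A n. \<Sum>m<?M. \<Sum>k<?K. 1 / (real ?M * real ?K) * PP p n (enc n m k) z)
             = (\<Sum>z\<in>E n. W n z)"
      unfolding E_def W_def by (intro sum.cong refl) (simp add: warden_eq)
    also have "real (card (A n)) / real ?M \<le> exp (- \<delta>) ^ n"
    proof -
      have "real (card (A n)) / real ?M \<le> exp (real n * b) / 2 powr (real n * R)"
        using cardA[of n] num_msgs_ge[of n R] M by (intro frac_le) auto
      also have "\<dots> = exp (- \<delta>) ^ n"
        by (simp add: powr_def b_def \<delta>_def exp_of_nat_mult[symmetric] flip: exp_diff)
           (simp add: algebra_simps)
      finally show ?thesis .
    qed
    also have "(\<Sum>z\<in>E n. W n z) \<le> D n + exp 1 * r ^ n"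
    proof -
      have wp: "(\<forall>z\<in>seqs n. W n z \<ge> 0) \<and> (\<Sum>z\<in>seqs n. W n z) = 1"
        unfolding W_def using warden_props[OF p _ valid[of n]] RK by auto
      have "1 * (\<Sum>z\<in>E n. W n z) - exp 1 * (\<Sum>z\<in>E n. iid ?q z) \<le> D n"
        unfolding D_def using wp qpos
        by (intro Dn_event) (auto simp: E_def sum_iid)
      then show ?thesis using QE[of n] by (smt (verit) exp_gt_zero mult_left_mono)
    qed
    finally show ?thesis by (simp add: U_def)
  qed
  have "U \<longlonglongrightarrow> 0 + (0 + exp 1 * 0)"
    unfolding U_def using \<delta> r0 r1 Dlim
    by (intro tendsto_intros LIMSEQ_power_zero) auto
  then have Ul: "U \<longlonglongrightarrow> 0" by simp
  have "(\<lambda>n. 1 - err_prob ?q xor_chan n (num_msgs n R) (num_keys n RK) (enc n) (dec n)) \<longlonglongrightarrow> 1 - 0"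
    by (intro tendsto_intros err)
  then have "1 - 0 \<le> (0::real)"
    using Ul bound by (intro tendsto_le[OF trivial_limit_sequentially Ul]) auto
  then show False by simp
qed



lemma greedy:
  fixes w :: "'a \<Rightarrow> real"
  assumes fin: "finite G" and M: "M > 0" and e: "\<epsilon> \<ge> 0" and w: "\<forall>z\<in>G. 0 \<le> w z \<and> w z \<le> \<epsilon>"
  shows "\<exists>h. (\<forall>z\<in>G. h z < (M::nat)) \<and>
           (\<forall>i<M. \<forall>j<M. (\<Sum>z\<in>{z\<in>G. h z = i}. w z) \<le> (\<Sum>z\<in>{z\<in>G. h z = j}. w z) + \<epsilon>)"
  using fin w
proof (induction G rule: finite_induct)
  case empty
  show ?case using e M by (intro exI[of _ "\<lambda>_. 0"]) auto
next
  case (insert x F)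
  then obtain h where h: "\<forall>z\<in>F. h z < M"
    and hc: "\<forall>i<M. \<forall>j<M. (\<Sum>z\<in>{z\<in>F. h z = i}. w z) \<le> (\<Sum>z\<in>{z\<in>F. h z = j}. w z) + \<epsilon>"
    by auto
  define c where "c i = (\<Sum>z\<in>{z\<in>F. h z = i}. w z)" for i
  obtain i0 where i0: "i0 < M" "\<forall>j<M. c i0 \<le> c j"
  proof -
    have "finite (c ` {..<M})" "c ` {..<M} \<noteq> {}" using M by auto
    then have "Min (c ` {..<M}) \<in> c ` {..<M}" by (rule Min_in)
    then obtain i0 where "i0 < M" "c i0 = Min (c ` {..<M})" by auto
    moreover have "\<forall>j<M. Min (c ` {..<M}) \<le> c j" by auto
    ultimately show ?thesis using that by auto
  qed
  define h' where "h' = h(x := i0)"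
  have cell: "(\<Sum>z\<in>{z\<in>insert x F. h' z = i}. w z) = c i + (if i = i0 then w x else 0)" for i
  proof (cases "i = i0")
    case True
    then have "{z\<in>insert x F. h' z = i} = insert x {z\<in>F. h z = i}"
      using insert.hyps(2) by (auto simp: h'_def)
    then show ?thesis using True insert.hyps by (simp add: c_def)
  next
    case False
    then have "{z\<in>insert x F. h' z = i} = {z\<in>F. h z = i}"
      using insert.hyps(2) by (auto simp: h'_def)
    then show ?thesis using False by (simp add: c_def)
  qed
  have wx: "0 \<le> w x" "w x \<le> \<epsilon>" using insert.prems by auto
  show ?case
  proof (intro exI[of _ h'] conjI allI impI ballI)
    fix z assume "z \<in> insert x F" then show "h' z < M" using h i0 by (auto simp: h'_def)
  next
    fix i j assume ij: "i < M" "j < M"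
    have hcc: "c i \<le> c j + \<epsilon>" using hc ij by (simp add: c_def)
    show "(\<Sum>z\<in>{z\<in>insert x F. h' z = i}. w z) \<le> (\<Sum>z\<in>{z\<in>insert x F. h' z = j}. w z) + \<epsilon>"
      unfolding cell using hcc i0 ij wx
      by (cases "i = i0"; cases "j = i0") (auto simp: c_def)
  qed
qed

lemma greedy_cell_lower:
  fixes w :: "'a \<Rightarrow> real"
  assumes fin: "finite G" and M: "M > 0"
    and h: "\<forall>z\<in>G. h z < (M::nat)"
    and hc: "\<forall>i<M. \<forall>j<M. (\<Sum>z\<in>{z\<in>G. h z = i}. w z) \<le> (\<Sum>z\<in>{z\<in>G. h z = j}. w z) + \<epsilon>"
    and j: "j < M"
  shows "(\<Sum>z\<in>G. w z) \<le> real M * ((\<Sum>z\<in>{z\<in>G. h z = j}. w z) + \<epsilon>)"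
proof -
  have "(\<Sum>z\<in>G. w z) = (\<Sum>i<M. \<Sum>z\<in>{z\<in>G. h z = i}. w z)"
    using fin h by (intro sum.group[symmetric]) auto
  also have "\<dots> \<le> (\<Sum>i<M. (\<Sum>z\<in>{z\<in>G. h z = j}. w z) + \<epsilon>)"
    using hc j by (intro sum_mono) auto
  also have "\<dots> = real M * ((\<Sum>z\<in>{z\<in>G. h z = j}. w z) + \<epsilon>)" by simp
  finally show ?thesis .
qed

lemma vx_vx: "length x = length s \<Longrightarrow> vx (vx x s) s = x"
  by (auto simp: list_eq_iff_nth_eq vx_nth)

lemma take_vx: "take i (vx x s) = vx (take i x) (take i s)"
  by (simp add: vx_def take_map take_zip)

lemma sum_vx_full:
  assumes s: "s \<in> seqs n"
  shows "(\<Sum>x\<in>seqs n. f (vx x s)) = (\<Sum>z\<in>seqs n. f z)"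
  by (rule sum.reindex_bij_witness[where i = "\<lambda>z. vx z s" and j = "\<lambda>z. vx z s"])
     (use s in \<open>auto simp: seqs_def vx_vx\<close>)

lemma sum_vx_take:
  assumes s: "s \<in> seqs n" and i: "i \<le> n" and u: "u \<in> seqs i"
  shows "(\<Sum>x\<in>{x\<in>seqs n. take i x = u}. f (vx x s)) = (\<Sum>z\<in>{z\<in>seqs n. take i z = vx u (take i s)}. f z)"
proof (rule sum.reindex_bij_witness[where i = "\<lambda>z. vx z s" and j = "\<lambda>z. vx z s"])
  fix a assume a: "a \<in> {z\<in>seqs n. take i z = vx u (take i s)}"
  then show "vx (vx a s) s = a" using s by (simp add: seqs_def vx_vx)
  have "take i (vx a s) = vx (vx u (take i s)) (take i s)" using a by (simp add: take_vx)
  also have "\<dots> = u" using u s i by (intro vx_vx) (simp add: seqs_def)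
  finally show "vx a s \<in> {x\<in>seqs n. take i x = u}" using a s by (simp add: seqs_def)
next
  fix a assume a: "a \<in> {x\<in>seqs n. take i x = u}"
  then show "vx (vx a s) s = a" using s by (simp add: seqs_def vx_vx)
  show "vx a s \<in> {z\<in>seqs n. take i z = vx u (take i s)}" using a s by (simp add: seqs_def take_vx)
  show "f (vx a s) = f (vx a s)" by simp
qed



definition Gs :: "real \<Rightarrow> real \<Rightarrow> nat \<Rightarrow> bool list set" where
  "Gs p a n = {z\<in>seqs n. iid (bern p) z \<le> exp (- real n * a)}"

definition hsel :: "real \<Rightarrow> real \<Rightarrow> real \<Rightarrow> nat \<Rightarrow> bool list \<Rightarrow> nat" where
  "hsel p a R n = (SOME h. (\<forall>z\<in>Gs p a n. h z < num_msgs n R) \<and>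
      (\<forall>i<num_msgs n R. \<forall>j<num_msgs n R.
         (\<Sum>z\<in>{z\<in>Gs p a n. h z = i}. iid (bern p) z) \<le> (\<Sum>z\<in>{z\<in>Gs p a n. h z = j}. iid (bern p) z) + exp (- real n * a)))"

definition cQ :: "real \<Rightarrow> real \<Rightarrow> real \<Rightarrow> nat \<Rightarrow> nat \<Rightarrow> real" where
  "cQ p a R n m = (\<Sum>z\<in>{z\<in>Gs p a n. hsel p a R n z = m}. iid (bern p) z)"

definition Wc :: "real \<Rightarrow> real \<Rightarrow> real \<Rightarrow> nat \<Rightarrow> nat \<Rightarrow> bool list \<Rightarrow> real" where
  "Wc p a R n m z = (if cQ p a R n m > 0
      then (if z \<in> Gs p a n \<and> hsel p a R n z = m then iid (bern p) z / cQ p a R n m else 0)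
      else (if z = replicate n False then 1 else 0))"

definition encA :: "real \<Rightarrow> real \<Rightarrow> real \<Rightarrow> nat \<Rightarrow> nat \<Rightarrow> nat \<Rightarrow> bool list \<Rightarrow> bool list \<Rightarrow> real" where
  "encA p a R n m k s x = (if s \<in> seqs n \<and> x \<in> seqs n then Wc p a R n m (vx x s) else 0)"

definition decA :: "real \<Rightarrow> real \<Rightarrow> real \<Rightarrow> nat \<Rightarrow> bool list \<Rightarrow> nat \<Rightarrow> nat" where
  "decA p a R n z k = hsel p a R n z"

lemma sum_ind: "finite S \<Longrightarrow> (\<Sum>z'\<in>S. f z' * (if z' = z then 1 else (0::real))) = (if z \<in> S then f z else 0)"
proof -
  assume "finite S"
  have "(\<Sum>z'\<in>S. f z' * (if z' = z then 1 else (0::real))) = (\<Sum>z'\<in>S. if z' = z then f z' else 0)"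
    by (intro sum.cong refl) auto
  then show ?thesis using \<open>finite S\<close> by simp
qed

context
  fixes p a R :: real
  assumes p: "0 < p" "p < 1"
begin

lemma qpos': "iid (bern p) z > 0" using p by (intro iid_pos bern_pos)

lemma finite_Gs[simp]: "finite (Gs p a n)" by (simp add: Gs_def)

lemma hsel_prop:
  "(\<forall>z\<in>Gs p a n. hsel p a R n z < num_msgs n R) \<and>
      (\<forall>i<num_msgs n R. \<forall>j<num_msgs n R.
         (\<Sum>z\<in>{z\<in>Gs p a n. hsel p a R n z = i}. iid (bern p) z) \<le> (\<Sum>z\<in>{z\<in>Gs p a n. hsel p a R n z = j}. iid (bern p) z) + exp (- real n * a))"
proof -
  have "\<exists>h. (\<forall>z\<in>Gs p a n. h z < num_msgs n R) \<and>
      (\<forall>i<num_msgs n R. \<forall>j<num_msgs n R.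
         (\<Sum>z\<in>{z\<in>Gs p a n. h z = i}. iid (bern p) z) \<le> (\<Sum>z\<in>{z\<in>Gs p a n. h z = j}. iid (bern p) z) + exp (- real n * a))"
    using qpos' by (intro greedy num_msgs_pos) (auto simp: Gs_def less_imp_le)
  then show ?thesis unfolding hsel_def by (rule someI_ex)
qed

lemma cQ_lower:
  assumes "m < num_msgs n R"
  shows "(\<Sum>z\<in>Gs p a n. iid (bern p) z) \<le> real (num_msgs n R) * (cQ p a R n m + exp (- real n * a))"
  unfolding cQ_def using hsel_prop assms
  by (intro greedy_cell_lower[OF finite_Gs num_msgs_pos]) auto

lemma Wc_nonneg: "Wc p a R n m z \<ge> 0"
  unfolding Wc_def using qpos'[of z] by (auto simp: less_imp_le)

lemma Wc_sum: "(\<Sum>z\<in>seqs n. Wc p a R n m z) = 1"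
proof (cases "cQ p a R n m > 0")
  case True
  have "(\<Sum>z\<in>seqs n. Wc p a R n m z) = (\<Sum>z\<in>seqs n. if z \<in> {z\<in>Gs p a n. hsel p a R n z = m} then iid (bern p) z / cQ p a R n m else 0)"
    unfolding Wc_def using True by (intro sum.cong refl) auto
  also have "\<dots> = (\<Sum>z\<in>{z\<in>Gs p a n. hsel p a R n z = m}. iid (bern p) z / cQ p a R n m)"
    by (subst sum.If_cases) (auto simp: Gs_def intro!: sum.cong)
  also have "\<dots> = 1" using True by (simp add: sum_divide_distrib[symmetric] cQ_def)
  finally show ?thesis .
next
  case False
  have "replicate n False \<in> seqs n" by (simp add: seqs_def)
  then show ?thesis unfolding Wc_def using False by simp
qed

lemma valid_encA: "valid_encoder n M K (encA p a R n)"
  unfolding valid_encoder_def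
proof (intro allI impI ballI conjI)
  fix m k and s x :: "bool list" show "0 \<le> encA p a R n m k s x" by (simp add: encA_def Wc_nonneg)
next
  fix m k and s :: "bool list" assume s: "s \<in> seqs n"
  have "(\<Sum>x\<in>seqs n. encA p a R n m k s x) = (\<Sum>x\<in>seqs n. Wc p a R n m (vx x s))"
    using s by (intro sum.cong refl) (simp add: encA_def)
  also have "\<dots> = 1" using s by (simp add: sum_vx_full Wc_sum)
  finally show "(\<Sum>x\<in>seqs n. encA p a R n m k s x) = 1" .
qed

lemma causal_encA: "causal_encoder n M K (encA p a R n)"
  unfolding causal_encoder_def
proof (intro allI impI ballI)
  fix m k i and s s' u :: "bool list"
  assume s: "s \<in> seqs n" and s': "s' \<in> seqs n" and i: "i \<le> n" and tk: "take i s = take i s'" and u: "u \<in> seqs i"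
  have "(\<Sum>x\<in>{x\<in>seqs n. take i x = u}. encA p a R n m k s x) = (\<Sum>x\<in>{x\<in>seqs n. take i x = u}. Wc p a R n m (vx x s))"
    using s by (intro sum.cong refl) (simp add: encA_def)
  also have "\<dots> = (\<Sum>z\<in>{z\<in>seqs n. take i z = vx u (take i s)}. Wc p a R n m z)"
    by (rule sum_vx_take[OF s i u])
  also have "\<dots> = (\<Sum>x\<in>{x\<in>seqs n. take i x = u}. Wc p a R n m (vx x s'))"
    unfolding tk by (rule sum_vx_take[OF s' i u, symmetric])
  also have "\<dots> = (\<Sum>x\<in>{x\<in>seqs n. take i x = u}. encA p a R n m k s' x)"
    using s' by (intro sum.cong refl) (simp add: encA_def)
  finally show "(\<Sum>x\<in>{x\<in>seqs n. take i x = u}. encA p a R n m k s x) = (\<Sum>x\<in>{x\<in>seqs n. take i x = u}. encA p a R n m k s' x)" .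
qed

lemma PP_encA:
  assumes z: "z \<in> seqs n"
  shows "PP p n (encA p a R n m k) z = Wc p a R n m z"
proof -
  have "PP p n (encA p a R n m k) z = (\<Sum>s\<in>seqs n. iid (bern p) s * (\<Sum>x\<in>seqs n. Wc p a R n m (vx x s) * (if vx x s = z then 1 else 0)))"
    unfolding PP_def by (intro sum.cong refl) (simp add: encA_def sum_distrib_left mult.assoc)
  also have "\<dots> = (\<Sum>s\<in>seqs n. iid (bern p) s * (\<Sum>z'\<in>seqs n. Wc p a R n m z' * (if z' = z then 1 else 0)))"
    by (intro sum.cong refl) (simp add: sum_vx_full[where f = "\<lambda>z'. Wc p a R n m z' * (if z' = z then 1 else 0)"])
  also have "\<dots> = (\<Sum>s\<in>seqs n. iid (bern p) s) * Wc p a R n m z"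
    using z by (simp add: sum_distrib_right sum_ind)
  also have "\<dots> = Wc p a R n m z" by (simp add: sum_iid)
  finally show ?thesis .
qed

end



lemma num_msgs_le: "0 \<le> R \<Longrightarrow> real (num_msgs n R) \<le> 2 powr (real n * R) + 1"
proof -
  have "real_of_int \<lceil>2 powr (real n * R)\<rceil> \<le> 2 powr (real n * R) + 1"
    by linarith
  moreover have "\<lceil>2 powr (real n * R)\<rceil> \<ge> 0" by (simp add: ceiling_le_zero) (smt (verit) powr_gt_zero)
  ultimately show ?thesis by (simp add: num_msgs_def)
qed

lemma cost_zero: "exp_cost PS W (\<lambda>_. 0) n M K e = 0"
  by (simp add: exp_cost_def)

lemma achievable:
  assumes p: "0 < p" "p < 1" and R: "0 < R" "R * ln 2 < HH p" and RK: "0 < RK"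
  shows "covert_achievable True (bern p) xor_chan False (\<lambda>_. 0) 0 RK R"
proof -
  define a where "a = (R * ln 2 + HH p) / 2"
  define \<delta> where "\<delta> = HH p - a"
  have \<delta>: "\<delta> > 0" using R by (simp add: \<delta>_def a_def)
  have Rl: "R * ln 2 > 0" using R by simp
  have a0: "a > 0" unfolding a_def using R(2) Rl by (intro divide_pos_pos add_pos_pos) auto
  obtain t where t: "t > 0" "FF p t * exp (t * HH p) < exp (t * \<delta>)"
    using hh_small[OF p \<delta>] by blast
  define r where "r = FF p t * exp (t * a)"
  have r0: "r > 0" by (simp add: r_def FF_pos)
  have r1: "r < 1"
  proof -
    have "r = (FF p t * exp (t * HH p)) * exp (- (t * \<delta>))"
      by (simp add: r_def \<delta>_def algebra_simps flip: exp_add)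
    also have "\<dots> < exp (t * \<delta>) * exp (- (t * \<delta>))"
      using t by (intro mult_strict_right_mono) auto
    also have "\<dots> = 1" by (simp flip: exp_add)
    finally show ?thesis .
  qed
  let ?q = "bern p"
  have qpos: "\<And>z. iid ?q z > 0" using p by (intro iid_pos bern_pos)
  define M where "M n = num_msgs n R" for n
  define K where "K n = num_keys n RK" for n
  define \<eta> where "\<eta> n = r ^ n + real (M n) * exp (- real n * a)" for n
  have QG: "(\<Sum>z\<in>Gs p a n. iid ?q z) \<ge> 1 - r ^ n" for n
  proof -
    have "(\<Sum>z\<in>seqs n - Gs p a n. iid ?q z) \<le> exp (- real n * a) powr (- t) * FF p t ^ n"
    proof (rule chernoff[OF p])
      show "\<forall>z\<in>seqs n - Gs p a n. 1 \<le> (iid ?q z / exp (- real n * a)) powr t"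
      proof
        fix z assume "z \<in> seqs n - Gs p a n"
        then have "iid ?q z / exp (- real n * a) \<ge> 1" by (auto simp: Gs_def)
        then show "1 \<le> (iid ?q z / exp (- real n * a)) powr t" using t by (intro ge_one_powr_ge_zero) auto
      qed
    qed auto
    also have "\<dots> = r ^ n"
      by (simp add: r_def powr_def power_mult_distrib exp_of_nat_mult[symmetric] algebra_simps)
    finally have "(\<Sum>z\<in>seqs n - Gs p a n. iid ?q z) \<le> r ^ n" .
    moreover have "(\<Sum>z\<in>seqs n. iid ?q z) = (\<Sum>z\<in>seqs n - Gs p a n. iid ?q z) + (\<Sum>z\<in>Gs p a n. iid ?q z)"
      by (rule sum.subset_diff) (auto simp: Gs_def)
    ultimately show ?thesis by (simp add: sum_iid)
  qed
  have cQlow: "real (M n) * cQ p a R n m \<ge> 1 - \<eta> n" if "m < M n" for n m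
    using QG[of n] cQ_lower[where a=a and R=R and m=m and n=n, OF p] that by (simp add: M_def \<eta>_def algebra_simps)
  have \<eta>lim: "\<eta> \<longlonglongrightarrow> 0"
  proof -
    have le: "real (M n) * exp (- real n * a) \<le> exp (R * ln 2 - a) ^ n + exp (- a) ^ n" for n
    proof -
      have "real (M n) * exp (- real n * a) \<le> (2 powr (real n * R) + 1) * exp (- real n * a)"
        using num_msgs_le[of R n] R by (intro mult_right_mono) (auto simp: M_def)
      also have "\<dots> = exp (R * ln 2 - a) ^ n + exp (- a) ^ n"
        by (simp add: powr_def distrib_right exp_of_nat_mult[symmetric] flip: exp_add) (simp add: algebra_simps)
      finally show ?thesis .
    qed
    have "(\<lambda>n. exp (R * ln 2 - a) ^ n + exp (- a) ^ n) \<longlonglongrightarrow> 0 + 0"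
    proof (rule tendsto_add[OF LIMSEQ_power_zero LIMSEQ_power_zero])
      have "R * ln 2 - a < 0" using R by (simp add: a_def)
      then show "norm (exp (R * ln 2 - a)) < 1" by simp
      show "norm (exp (- a)) < 1" using a0 by simp
    qed
    then have lim0: "(\<lambda>n. exp (R * ln 2 - a) ^ n + exp (- a) ^ n) \<longlonglongrightarrow> 0" by simp
    have e1: "eventually (\<lambda>n. (0::real) \<le> real (M n) * exp (- real n * a)) sequentially" by simp
    have e2: "eventually (\<lambda>n. real (M n) * exp (- real n * a) \<le> exp (R * ln 2 - a) ^ n + exp (- a) ^ n) sequentially"
      using le by simp
    have l2: "(\<lambda>n. real (M n) * exp (- real n * a)) \<longlonglongrightarrow> 0"
      by (rule tendsto_sandwich[OF e1 e2 tendsto_const lim0])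
    have "(\<lambda>n. r ^ n + real (M n) * exp (- real n * a)) \<longlonglongrightarrow> 0 + 0"
      using r0 r1 l2 by (intro tendsto_add LIMSEQ_power_zero) auto
    moreover have "\<eta> = (\<lambda>n. r ^ n + real (M n) * exp (- real n * a))" by (rule ext) (simp add: \<eta>_def)
    ultimately show ?thesis by simp
  qed
  have ev: "eventually (\<lambda>n. \<eta> n < 1/2) sequentially"
    using \<eta>lim by (intro order_tendstoD(2)) auto
  have good_cQ: "cQ p a R n m > 0" if "\<eta> n < 1/2" "m < M n" for n m
  proof -
    have "real (M n) * cQ p a R n m > 0" using cQlow[OF that(2)] that(1) by simp
    then show ?thesis using that by (simp add: zero_less_mult_iff)
  qed
  have err0: "err_prob ?q xor_chan n (M n) (K n) (encA p a R n) (decA p a R n) = 0" if "\<eta> n < 1/2" for n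
    unfolding err_eq
  proof (intro sum.neutral ballI)
    fix m k assume m: "m \<in> {..<M n}" and k: "k \<in> {..<K n}"
    have "(\<Sum>z\<in>seqs n. PP p n (encA p a R n m k) z * (if decA p a R n z k \<noteq> m then 1 else 0)) = 0"
    proof (intro sum.neutral ballI)
      fix z :: "bool list" assume z: "z \<in> seqs n"
      have "cQ p a R n m > 0" using good_cQ that m by auto
      then show "PP p n (encA p a R n m k) z * (if decA p a R n z k \<noteq> m then 1 else 0) = 0"
        using z by (auto simp: PP_encA[OF p] Wc_def decA_def)
    qed
    then show "1 / (real (M n) * real (K n)) *
         (\<Sum>z\<in>seqs n. PP p n (encA p a R n m k) z * (if decA p a R n z k \<noteq> m then 1 else 0)) = 0" by simp
  qed
  define Wd where "Wd n = warden_out ?q xor_chan n (M n) (K n) (encA p a R n)" for n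
  have wbound: "Wd n z \<le> (1 / (1 - \<eta> n)) * iid ?q z" if "\<eta> n < 1/2" "z \<in> seqs n" for n z
  proof -
    have Mp: "M n > 0" by (simp add: M_def num_msgs_pos)
    have Kp: "K n > 0" using RK by (simp add: K_def num_keys_pos)
    have e1: "1 - \<eta> n > 0" using that by simp
    have Wle: "Wc p a R n m z \<le> (if hsel p a R n z = m then real (M n) * iid ?q z / (1 - \<eta> n) else 0)"
      if m: "m < M n" for m
    proof -
      have cq: "cQ p a R n m > 0" using good_cQ \<open>\<eta> n < 1/2\<close> m by auto
      have cl: "real (M n) * cQ p a R n m \<ge> 1 - \<eta> n" using cQlow m by auto
      show ?thesis
      proof (cases "z \<in> Gs p a n \<and> hsel p a R n z = m")
        case True
        have "iid ?q z / cQ p a R n m \<le> real (M n) * iid ?q z / (1 - \<eta> n)"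
          using cq cl e1 qpos[of z] by (simp add: divide_simps)
        then show ?thesis using True cq by (simp add: Wc_def)
      next
        case False
        then show ?thesis using cq qpos[of z] e1 Mp by (auto simp: Wc_def intro!: divide_nonneg_pos less_imp_le)
      qed
    qed
    have "Wd n z = (\<Sum>m<M n. \<Sum>k<K n. 1 / (real (M n) * real (K n)) * Wc p a R n m z)"
      unfolding Wd_def using that by (simp add: warden_eq PP_encA[OF p])
    also have "\<dots> = (\<Sum>m<M n. (1 / real (M n)) * Wc p a R n m z)"
      using Kp by (intro sum.cong refl) simp
    also have "\<dots> \<le> (\<Sum>m<M n. (1 / real (M n)) * (if hsel p a R n z = m then real (M n) * iid ?q z / (1 - \<eta> n) else 0))"
      using Wle by (intro sum_mono mult_left_mono) auto
    also have "\<dots> = (\<Sum>m<M n. if hsel p a R n z = m then iid ?q z / (1 - \<eta> n) else 0)"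
      using Mp by (intro sum.cong refl) auto
    also have "\<dots> \<le> iid ?q z / (1 - \<eta> n)"
      using qpos[of z] e1 by (simp add: sum.delta)
    finally show ?thesis by simp
  qed
  define D where "D n = Dn (Wd n) (iid ?q) (seqs n)" for n
  have wp: "(\<forall>z\<in>seqs n. Wd n z \<ge> 0) \<and> (\<Sum>z\<in>seqs n. Wd n z) = 1" for n
    unfolding Wd_def M_def K_def using warden_props[OF p _ valid_encA[OF p]] RK by auto
  have D0: "D n \<ge> 0" for n
    unfolding D_def using wp[of n] qpos by (intro Dn_nonneg) (auto simp: sum_iid)
  have Dup: "D n \<le> ln (1 / (1 - \<eta> n))" if "\<eta> n < 1/2" for n
    unfolding D_def using wp[of n] qpos wbound[OF that] by (intro Dn_upper) auto
  have "(\<lambda>n. ln (1 / (1 - \<eta> n))) \<longlonglongrightarrow> ln (1 / (1 - 0))"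
    by (intro tendsto_intros \<eta>lim) auto
  then have lnl: "(\<lambda>n. ln (1 / (1 - \<eta> n))) \<longlonglongrightarrow> 0" by simp
  have e1: "eventually (\<lambda>n. 0 \<le> D n) sequentially" using D0 by simp
  have e2: "eventually (\<lambda>n. D n \<le> ln (1 / (1 - \<eta> n))) sequentially"
    using ev by (rule eventually_mono) (rule Dup)
  have "D \<longlonglongrightarrow> 0" by (rule tendsto_sandwich[OF e1 e2 tendsto_const lnl])
  then have Dl: "(\<lambda>n. D n / ln 2) \<longlonglongrightarrow> 0 / ln 2" using ln_gt_zero[of "2::real"] by (intro tendsto_divide tendsto_const) auto
  show ?thesis
    unfolding covert_achievable_def
  proof (intro exI[of _ "encA p a R"] exI[of _ "decA p a R"] conjI allI impI)
    fix n
    show "valid_encoder n (num_msgs n R) (num_keys n RK) (encA p a R n)" by (rule valid_encA[OF p])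
    show "causal_encoder n (num_msgs n R) (num_keys n RK) (encA p a R n)" by (rule causal_encA[OF p])
  next
    show "limsup (\<lambda>n. ereal (exp_cost ?q xor_chan (\<lambda>_. 0) n (num_msgs n R) (num_keys n RK) (encA p a R n))) \<le> ereal 0"
      by (simp add: cost_zero zero_ereal_def[symmetric] Limsup_const)
  next
    have "eventually (\<lambda>n. err_prob ?q xor_chan n (M n) (K n) (encA p a R n) (decA p a R n) = 0) sequentially"
      using ev by (rule eventually_mono) (simp add: err0)
    then show "(\<lambda>n. err_prob ?q xor_chan n (num_msgs n R) (num_keys n RK) (encA p a R n) (decA p a R n)) \<longlonglongrightarrow> 0"
      unfolding M_def K_def by (rule tendsto_eventually)
  next
    have "(\<lambda>n. rel_entropy (warden_out ?q xor_chan n (num_msgs n R) (num_keys n RK) (encA p a R n))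
                          (iid (Q0 ?q xor_chan False)) (seqs n)) = (\<lambda>n. ereal (D n / ln 2))"
      unfolding Q0_bern using qpos by (simp add: rel_entropy_Dn D_def Wd_def M_def K_def)
    then show "(\<lambda>n. rel_entropy (warden_out ?q xor_chan n (num_msgs n R) (num_keys n RK) (encA p a R n))
                          (iid (Q0 ?q xor_chan False)) (seqs n)) \<longlonglongrightarrow> 0"
      using Dl by (simp add: zero_ereal_def)
  qed
qed



lemma HH_pos: "0 < p \<Longrightarrow> p < 1 \<Longrightarrow> HH p > 0"
proof -
  assume p: "0 < p" "p < 1"
  have "p * ln p < 0" using p by (intro mult_pos_neg) auto
  moreover have "(1 - p) * ln (1 - p) < 0" using p by (intro mult_pos_neg) auto
  ultimately show ?thesis by (simp add: HH_def)
qed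

lemma ach_weaken: "covert_achievable True PS W x0 b B RK R \<Longrightarrow> covert_achievable False PS W x0 b B RK R"
  unfolding covert_achievable_def by blast

lemma cap_main:
  assumes p: "0 < p" "p < 1" and RK: "0 < RK"
  shows "bdd_above {R. covert_achievable cs (bern p) xor_chan False (\<lambda>_. 0) 0 RK R}
       \<and> covert_capacity cs (bern p) xor_chan False (\<lambda>_. 0) 0 RK = Hb p"
proof -
  let ?S = "{R. covert_achievable cs (bern p) xor_chan False (\<lambda>_. 0) 0 RK R}"
  have up: "\<And>R. R \<in> ?S \<Longrightarrow> R \<le> Hb p" using converse[OF p RK] by blast
  have Hb0: "Hb p > 0" using HH_pos[OF p] Hb_HH[OF p] by simp
  have ach: "R \<in> ?S" if "0 < R" "R < Hb p" for R
  proof -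
    have "R * ln 2 < HH p" using that Hb_HH[OF p] by (simp add: pos_less_divide_eq)
    then have "covert_achievable True (bern p) xor_chan False (\<lambda>_. 0) 0 RK R"
      using achievable[OF p that(1) _ RK] by blast
    then show ?thesis by (cases cs) (auto intro: ach_weaken)
  qed
  have "Sup ?S = Hb p"
  proof (rule cSup_eq_non_empty)
    show "?S \<noteq> {}" using ach[of "Hb p / 2"] Hb0 by auto
    show "\<And>x. x \<in> ?S \<Longrightarrow> x \<le> Hb p" by (rule up)
    fix y assume y: "\<And>x. x \<in> ?S \<Longrightarrow> x \<le> y"
    show "Hb p \<le> y"
    proof (rule ccontr)
      assume "\<not> Hb p \<le> y"
      then have yl: "y < Hb p" by simp
      define R where "R = (max y 0 + Hb p) / 2"
      have "0 < R" "R < Hb p" "y < R" using yl Hb0 by (auto simp: R_def max_def)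
      then show False using y[OF ach[of R]] by auto
    qed
  qed
  moreover have "bdd_above ?S" using up by (auto simp: bdd_above_def)
  ultimately show ?thesis by (simp add: covert_capacity_def)
qed

theorem mainTheorem9:
  fixes p RK :: real
  assumes "0 < p" and "p < 1/2" and "0 < RK"
  shows "bdd_above {R. covert_achievable True (bern p) xor_chan False (\<lambda>_. 0) 0 RK R}
       \<and> covert_capacity True (bern p) xor_chan False (\<lambda>_. 0) 0 RK = Hb p
       \<and> bdd_above {R. covert_achievable False (bern p) xor_chan False (\<lambda>_. 0) 0 RK R}
       \<and> covert_capacity False (bern p) xor_chan False (\<lambda>_. 0) 0 RK = Hb p"
proof -
  have p: "0 < p" "p < 1" using assms by auto
  show ?thesis using cap_main[OF p assms(3), of True] cap_main[OF p assms(3), of False] by auto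
qed


end
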